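(* Let $R$ be a commutative ring with $2=0$, let $\mathcal{G}$ be the complete quadrilateral with points $a,b,c,x,y,z$ and lines $\ell_1=\{a,b,c\}$, $\ell_2=\{b,x,z\}$, $\ell_3=\{a,y,z\}$, $\ell_4=\{c,x,y\}$, and let $A=M_R(\mathcal{G},1)$. Put $\ell=\ell_1$ and $s=a+b+c+x+y+z$, and consider the $R$-basis $\mathcal{B}=(a,\ b,\ \ell,\ \ell x,\ \ell y,\ s)$ of $A$, where $\ell x=b+c+y+z$ and $\ell y=a+c+x+z$. For $\lambda\in R^\times$ and $i\in\{1,2,3,4\}$ let $\tau_{\ell_i,\lambda}=\mathrm{id}+(1+\lambda)\operatorname{ad}_{\ell_i}$. Then, with respect to $\mathcal{B}$ (the $j$-th column giving the coordinates of the image of the $j$-th basis vector), \[ \tau_{\ell_1,\lambda}=S_{0,0,\lambda},\quad \tau_{\ell_2,\lambda}=S_{1+\lambda,0,\lambda},\quad \tau_{\ell_3,\lambda}=S_{0,1+\lambda,\lambda},\quad \tau_{\ell_4,\lambda}=S_{1+\lambda,1+\lambda,\lambda}. \]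
   Context: For distinct collinear points $p,q$ (written $p\sim q$), $p\wedge q$ is the third point of their line. The nilpotent Matsuo algebra $A=M_R(\mathcal{G},1)$ is the free $R$-module with basis the points and commutative bilinear product $p\cdot q=0$ if $p=q$ or $p\not\sim q$, $p\cdot q=p+q+p\wedge q$ if $p\sim q$; a line is identified with the sum of its three points, and $\operatorname{ad}_{\ell}(v)=\ell v$. For $\alpha,\beta\in R$, $M_{\alpha,\beta}=\begin{pmatrix}\alpha&0&\beta\\0&\beta&\alpha\\0&0&0\end{pmatrix}$, and for $\lambda\in R^\times$, $S_{\alpha,\beta,\lambda}$ is the $6\times6$ block matrix $\begin{pmatrix}I_3&O_3\\ M_{\alpha,\beta}&\operatorname{diag}(\lambda,\lambda,1)\end{pmatrix}$ with $I_3$ the identity and $O_3$ the zero $3\times3$ matrix. *)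

theory Defs
  imports Main
begin

datatype pt = Pa | Pb | Pc | Px | Py | Pz

definition pts :: "pt set" where "pts = {Pa, Pb, Pc, Px, Py, Pz}"

definition l1 :: "pt set" where "l1 = {Pa, Pb, Pc}"
definition l2 :: "pt set" where "l2 = {Pb, Px, Pz}"
definition l3 :: "pt set" where "l3 = {Pa, Py, Pz}"
definition l4 :: "pt set" where "l4 = {Pc, Px, Py}"

definition glines :: "pt set set" where "glines = {l1, l2, l3, l4}"

definition coll :: "pt \<Rightarrow> pt \<Rightarrow> bool" where
  "coll p q \<longleftrightarrow> p \<noteq> q \<and> (\<exists>L\<in>glines. p \<in> L \<and> q \<in> L)"

definition wedge :: "pt \<Rightarrow> pt \<Rightarrow> pt" where
  "wedge p q = (THE r. \<exists>L\<in>glines. p \<in> L \<and> q \<in> L \<and> r \<in> L \<and> r \<noteq> p \<and> r \<noteq> q)"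

text \<open>Elements of the free R-module on the points are coefficient functions.\<close>
definition ev :: "pt \<Rightarrow> pt \<Rightarrow> 'a::comm_ring_1" where
  "ev p = (\<lambda>r. if r = p then 1 else 0)"

definition pprod :: "pt \<Rightarrow> pt \<Rightarrow> pt \<Rightarrow> 'a::comm_ring_1" where
  "pprod p q = (if coll p q then (\<lambda>r. ev p r + ev q r + ev (wedge p q) r) else (\<lambda>r. 0))"

definition mprod :: "(pt \<Rightarrow> 'a::comm_ring_1) \<Rightarrow> (pt \<Rightarrow> 'a) \<Rightarrow> pt \<Rightarrow> 'a" where
  "mprod v w = (\<lambda>r. \<Sum>p\<in>pts. \<Sum>q\<in>pts. v p * w q * pprod p q r)"

text \<open>A line identified with the sum of its points.\<close>
definition lvec :: "pt set \<Rightarrow> pt \<Rightarrow> 'a::comm_ring_1" where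
  "lvec L = (\<lambda>r. if r \<in> L then 1 else 0)"

definition ad :: "pt set \<Rightarrow> (pt \<Rightarrow> 'a::comm_ring_1) \<Rightarrow> pt \<Rightarrow> 'a" where
  "ad L v = mprod (lvec L) v"

definition tau :: "pt set \<Rightarrow> 'a::comm_ring_1 \<Rightarrow> (pt \<Rightarrow> 'a) \<Rightarrow> pt \<Rightarrow> 'a" where
  "tau L lam v = (\<lambda>r. v r + (1 + lam) * ad L v r)"

definition basisB :: "nat \<Rightarrow> pt \<Rightarrow> 'a::comm_ring_1" where
  "basisB j = (if j = 0 then ev Pa
     else if j = 1 then ev Pb
     else if j = 2 then lvec l1
     else if j = 3 then mprod (lvec l1) (ev Px)
     else if j = 4 then mprod (lvec l1) (ev Py)
     else (\<lambda>r. 1))"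

definition Mab :: "'a::comm_ring_1 \<Rightarrow> 'a \<Rightarrow> nat \<Rightarrow> nat \<Rightarrow> 'a" where
  "Mab \<alpha> \<beta> i j =
     (if i = 0 \<and> j = 0 then \<alpha> else if i = 0 \<and> j = 2 then \<beta>
      else if i = 1 \<and> j = 1 then \<beta> else if i = 1 \<and> j = 2 then \<alpha> else 0)"

definition Smat :: "'a::comm_ring_1 \<Rightarrow> 'a \<Rightarrow> 'a \<Rightarrow> nat \<Rightarrow> nat \<Rightarrow> 'a" where
  "Smat \<alpha> \<beta> lam i j =
     (if i < 3 \<and> j < 3 then (if i = j then 1 else 0)
      else if i < 3 then 0
      else if j < 3 then Mab \<alpha> \<beta> (i - 3) j
      else if i = j then (if i = 5 then 1 else lam) else 0)"

definition has_matrix :: "((pt \<Rightarrow> 'a::comm_ring_1) \<Rightarrow> pt \<Rightarrow> 'a) \<Rightarrow> (nat \<Rightarrow> nat \<Rightarrow> 'a) \<Rightarrow> bool" where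
  "has_matrix f S \<longleftrightarrow> (\<forall>j<6. f (basisB j) = (\<lambda>r. \<Sum>i<6. S i j * basisB i r))"

end

theory Submission imports Defs begin
lemma six: "{..<6::nat} = {5,4,3,2,1,0}"
  by (simp add: lessThan_nat_numeral lessThan_Suc)

lemma sum6: "(\<Sum>i<6. f i) = f 0 + f 1 + f 2 + f 3 + f 4 + (f (5::nat)::'a::comm_ring_1)"
  by (simp add: six ac_simps)

lemma all6: "(\<forall>j<6. P j) = (P 0 \<and> P 1 \<and> P 2 \<and> P 3 \<and> P 4 \<and> P (5::nat))"
proof -
  have "(\<forall>j<6. P j) = (\<forall>j\<in>{..<6}. P j)" by auto
  then show ?thesis by (simp add: six) blast
qed
lemma [simp]: "wedge Pa Pb = Pc"
  unfolding wedge_def glines_def l1_def l2_def l3_def l4_def by (rule the_equality) auto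

lemma [simp]: "wedge Pa Pc = Pb"
  unfolding wedge_def glines_def l1_def l2_def l3_def l4_def by (rule the_equality) auto

lemma [simp]: "wedge Pb Pa = Pc"
  unfolding wedge_def glines_def l1_def l2_def l3_def l4_def by (rule the_equality) auto

lemma [simp]: "wedge Pb Pc = Pa"
  unfolding wedge_def glines_def l1_def l2_def l3_def l4_def by (rule the_equality) auto

lemma [simp]: "wedge Pc Pa = Pb"
  unfolding wedge_def glines_def l1_def l2_def l3_def l4_def by (rule the_equality) auto

lemma [simp]: "wedge Pc Pb = Pa"
  unfolding wedge_def glines_def l1_def l2_def l3_def l4_def by (rule the_equality) auto

lemma [simp]: "wedge Pb Px = Pz"
  unfolding wedge_def glines_def l1_def l2_def l3_def l4_def by (rule the_equality) auto

lemma [simp]: "wedge Pb Pz = Px"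
  unfolding wedge_def glines_def l1_def l2_def l3_def l4_def by (rule the_equality) auto

lemma [simp]: "wedge Px Pb = Pz"
  unfolding wedge_def glines_def l1_def l2_def l3_def l4_def by (rule the_equality) auto

lemma [simp]: "wedge Px Pz = Pb"
  unfolding wedge_def glines_def l1_def l2_def l3_def l4_def by (rule the_equality) auto

lemma [simp]: "wedge Pz Pb = Px"
  unfolding wedge_def glines_def l1_def l2_def l3_def l4_def by (rule the_equality) auto

lemma [simp]: "wedge Pz Px = Pb"
  unfolding wedge_def glines_def l1_def l2_def l3_def l4_def by (rule the_equality) auto

lemma [simp]: "wedge Pa Py = Pz"
  unfolding wedge_def glines_def l1_def l2_def l3_def l4_def by (rule the_equality) auto

lemma [simp]: "wedge Pa Pz = Py"
  unfolding wedge_def glines_def l1_def l2_def l3_def l4_def by (rule the_equality) auto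

lemma [simp]: "wedge Py Pa = Pz"
  unfolding wedge_def glines_def l1_def l2_def l3_def l4_def by (rule the_equality) auto

lemma [simp]: "wedge Py Pz = Pa"
  unfolding wedge_def glines_def l1_def l2_def l3_def l4_def by (rule the_equality) auto

lemma [simp]: "wedge Pz Pa = Py"
  unfolding wedge_def glines_def l1_def l2_def l3_def l4_def by (rule the_equality) auto

lemma [simp]: "wedge Pz Py = Pa"
  unfolding wedge_def glines_def l1_def l2_def l3_def l4_def by (rule the_equality) auto

lemma [simp]: "wedge Pc Px = Py"
  unfolding wedge_def glines_def l1_def l2_def l3_def l4_def by (rule the_equality) auto

lemma [simp]: "wedge Pc Py = Px"
  unfolding wedge_def glines_def l1_def l2_def l3_def l4_def by (rule the_equality) auto

lemma [simp]: "wedge Px Pc = Py"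
  unfolding wedge_def glines_def l1_def l2_def l3_def l4_def by (rule the_equality) auto

lemma [simp]: "wedge Px Py = Pc"
  unfolding wedge_def glines_def l1_def l2_def l3_def l4_def by (rule the_equality) auto

lemma [simp]: "wedge Py Pc = Px"
  unfolding wedge_def glines_def l1_def l2_def l3_def l4_def by (rule the_equality) auto

lemma [simp]: "wedge Py Px = Pc"
  unfolding wedge_def glines_def l1_def l2_def l3_def l4_def by (rule the_equality) auto

lemma coll_simps [simp]: "coll p q = (p \<noteq> q \<and> (\<exists>L\<in>glines. p \<in> L \<and> q \<in> L))"
  by (simp add: coll_def)

lemma glines_simp [simp]: "(\<exists>L\<in>glines. P L) = (P {Pa, Pb, Pc} \<or> P {Pb, Px, Pz} \<or> P {Pa, Py, Pz} \<or> P {Pc, Px, Py})"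
  by (simp add: glines_def l1_def l2_def l3_def l4_def)
lemma mp_Pa: "mprod v w Pa = (\<Sum>p\<in>pts. \<Sum>q\<in>pts. v p * w q * pprod p q Pa)"
  by (simp add: mprod_def)
lemma mp_Pb: "mprod v w Pb = (\<Sum>p\<in>pts. \<Sum>q\<in>pts. v p * w q * pprod p q Pb)"
  by (simp add: mprod_def)
lemma mp_Pc: "mprod v w Pc = (\<Sum>p\<in>pts. \<Sum>q\<in>pts. v p * w q * pprod p q Pc)"
  by (simp add: mprod_def)
lemma mp_Px: "mprod v w Px = (\<Sum>p\<in>pts. \<Sum>q\<in>pts. v p * w q * pprod p q Px)"
  by (simp add: mprod_def)
lemma mp_Py: "mprod v w Py = (\<Sum>p\<in>pts. \<Sum>q\<in>pts. v p * w q * pprod p q Py)"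
  by (simp add: mprod_def)
lemma mp_Pz: "mprod v w Pz = (\<Sum>p\<in>pts. \<Sum>q\<in>pts. v p * w q * pprod p q Pz)"
  by (simp add: mprod_def)

lemma lvec_simp[simp]: "lvec L r = (if r \<in> L then 1 else 0)" by (simp add: lvec_def)
lemma ev_simp[simp]: "ev p r = (if r = p then 1 else 0)" by (simp add: ev_def)

lemma mprod_pt: "mprod v w r = (\<Sum>p\<in>pts. \<Sum>q\<in>pts. v p * w q * pprod p q r)"
  by (simp add: mprod_def)

lemma two_x: "(2::'a::comm_ring_1) = 0 \<Longrightarrow> 2 * (x::'a) = 0" by simp
lemma mx_l1_Pa: "mprod (lvec l1) (v::pt\<Rightarrow>'a::comm_ring_1) Pa = 2 * v Pa + 2 * v Pb + 2 * v Pc + v Py + v Pz"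
  by (simp add: mprod_pt pts_def pprod_def l1_def algebra_simps)
lemma m_l1_Pa[simp]: "(2::'a::comm_ring_1) = 0 \<Longrightarrow> mprod (lvec l1) (v::pt\<Rightarrow>'a) Pa = v Py + v Pz"
  by (simp add: mx_l1_Pa two_x)
lemma mx_l1_Pb: "mprod (lvec l1) (v::pt\<Rightarrow>'a::comm_ring_1) Pb = 2 * v Pa + 2 * v Pb + 2 * v Pc + v Px + v Pz"
  by (simp add: mprod_pt pts_def pprod_def l1_def algebra_simps)
lemma m_l1_Pb[simp]: "(2::'a::comm_ring_1) = 0 \<Longrightarrow> mprod (lvec l1) (v::pt\<Rightarrow>'a) Pb = v Px + v Pz"
  by (simp add: mx_l1_Pb two_x)
lemma mx_l1_Pc: "mprod (lvec l1) (v::pt\<Rightarrow>'a::comm_ring_1) Pc = 2 * v Pa + 2 * v Pb + 2 * v Pc + v Px + v Py"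
  by (simp add: mprod_pt pts_def pprod_def l1_def algebra_simps)
lemma m_l1_Pc[simp]: "(2::'a::comm_ring_1) = 0 \<Longrightarrow> mprod (lvec l1) (v::pt\<Rightarrow>'a) Pc = v Px + v Py"
  by (simp add: mx_l1_Pc two_x)
lemma mx_l1_Px: "mprod (lvec l1) (v::pt\<Rightarrow>'a::comm_ring_1) Px = 2 * v Px + v Py + v Pz"
  by (simp add: mprod_pt pts_def pprod_def l1_def algebra_simps)
lemma m_l1_Px[simp]: "(2::'a::comm_ring_1) = 0 \<Longrightarrow> mprod (lvec l1) (v::pt\<Rightarrow>'a) Px = v Py + v Pz"
  by (simp add: mx_l1_Px two_x)
lemma mx_l1_Py: "mprod (lvec l1) (v::pt\<Rightarrow>'a::comm_ring_1) Py = v Px + 2 * v Py + v Pz"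
  by (simp add: mprod_pt pts_def pprod_def l1_def algebra_simps)
lemma m_l1_Py[simp]: "(2::'a::comm_ring_1) = 0 \<Longrightarrow> mprod (lvec l1) (v::pt\<Rightarrow>'a) Py = v Px + v Pz"
  by (simp add: mx_l1_Py two_x)
lemma mx_l1_Pz: "mprod (lvec l1) (v::pt\<Rightarrow>'a::comm_ring_1) Pz = v Px + v Py + 2 * v Pz"
  by (simp add: mprod_pt pts_def pprod_def l1_def algebra_simps)
lemma m_l1_Pz[simp]: "(2::'a::comm_ring_1) = 0 \<Longrightarrow> mprod (lvec l1) (v::pt\<Rightarrow>'a) Pz = v Px + v Py"
  by (simp add: mx_l1_Pz two_x)
lemma mx_l2_Pa: "mprod (lvec l2) (v::pt\<Rightarrow>'a::comm_ring_1) Pa = 2 * v Pa + v Pc + v Py"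
  by (simp add: mprod_pt pts_def pprod_def l2_def algebra_simps)
lemma m_l2_Pa[simp]: "(2::'a::comm_ring_1) = 0 \<Longrightarrow> mprod (lvec l2) (v::pt\<Rightarrow>'a) Pa = v Pc + v Py"
  by (simp add: mx_l2_Pa two_x)
lemma mx_l2_Pb: "mprod (lvec l2) (v::pt\<Rightarrow>'a::comm_ring_1) Pb = v Pa + 2 * v Pb + v Pc + 2 * v Px + 2 * v Pz"
  by (simp add: mprod_pt pts_def pprod_def l2_def algebra_simps)
lemma m_l2_Pb[simp]: "(2::'a::comm_ring_1) = 0 \<Longrightarrow> mprod (lvec l2) (v::pt\<Rightarrow>'a) Pb = v Pa + v Pc"
  by (simp add: mx_l2_Pb two_x)
lemma mx_l2_Pc: "mprod (lvec l2) (v::pt\<Rightarrow>'a::comm_ring_1) Pc = v Pa + 2 * v Pc + v Py"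
  by (simp add: mprod_pt pts_def pprod_def l2_def algebra_simps)
lemma m_l2_Pc[simp]: "(2::'a::comm_ring_1) = 0 \<Longrightarrow> mprod (lvec l2) (v::pt\<Rightarrow>'a) Pc = v Pa + v Py"
  by (simp add: mx_l2_Pc two_x)
lemma mx_l2_Px: "mprod (lvec l2) (v::pt\<Rightarrow>'a::comm_ring_1) Px = 2 * v Pb + v Pc + 2 * v Px + v Py + 2 * v Pz"
  by (simp add: mprod_pt pts_def pprod_def l2_def algebra_simps)
lemma m_l2_Px[simp]: "(2::'a::comm_ring_1) = 0 \<Longrightarrow> mprod (lvec l2) (v::pt\<Rightarrow>'a) Px = v Pc + v Py"
  by (simp add: mx_l2_Px two_x)
lemma mx_l2_Py: "mprod (lvec l2) (v::pt\<Rightarrow>'a::comm_ring_1) Py = v Pa + v Pc + 2 * v Py"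
  by (simp add: mprod_pt pts_def pprod_def l2_def algebra_simps)
lemma m_l2_Py[simp]: "(2::'a::comm_ring_1) = 0 \<Longrightarrow> mprod (lvec l2) (v::pt\<Rightarrow>'a) Py = v Pa + v Pc"
  by (simp add: mx_l2_Py two_x)
lemma mx_l2_Pz: "mprod (lvec l2) (v::pt\<Rightarrow>'a::comm_ring_1) Pz = v Pa + 2 * v Pb + 2 * v Px + v Py + 2 * v Pz"
  by (simp add: mprod_pt pts_def pprod_def l2_def algebra_simps)
lemma m_l2_Pz[simp]: "(2::'a::comm_ring_1) = 0 \<Longrightarrow> mprod (lvec l2) (v::pt\<Rightarrow>'a) Pz = v Pa + v Py"
  by (simp add: mx_l2_Pz two_x)
lemma mx_l3_Pa: "mprod (lvec l3) (v::pt\<Rightarrow>'a::comm_ring_1) Pa = 2 * v Pa + v Pb + v Pc + 2 * v Py + 2 * v Pz"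
  by (simp add: mprod_pt pts_def pprod_def l3_def algebra_simps)
lemma m_l3_Pa[simp]: "(2::'a::comm_ring_1) = 0 \<Longrightarrow> mprod (lvec l3) (v::pt\<Rightarrow>'a) Pa = v Pb + v Pc"
  by (simp add: mx_l3_Pa two_x)
lemma mx_l3_Pb: "mprod (lvec l3) (v::pt\<Rightarrow>'a::comm_ring_1) Pb = 2 * v Pb + v Pc + v Px"
  by (simp add: mprod_pt pts_def pprod_def l3_def algebra_simps)
lemma m_l3_Pb[simp]: "(2::'a::comm_ring_1) = 0 \<Longrightarrow> mprod (lvec l3) (v::pt\<Rightarrow>'a) Pb = v Pc + v Px"
  by (simp add: mx_l3_Pb two_x)
lemma mx_l3_Pc: "mprod (lvec l3) (v::pt\<Rightarrow>'a::comm_ring_1) Pc = v Pb + 2 * v Pc + v Px"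
  by (simp add: mprod_pt pts_def pprod_def l3_def algebra_simps)
lemma m_l3_Pc[simp]: "(2::'a::comm_ring_1) = 0 \<Longrightarrow> mprod (lvec l3) (v::pt\<Rightarrow>'a) Pc = v Pb + v Px"
  by (simp add: mx_l3_Pc two_x)
lemma mx_l3_Px: "mprod (lvec l3) (v::pt\<Rightarrow>'a::comm_ring_1) Px = v Pb + v Pc + 2 * v Px"
  by (simp add: mprod_pt pts_def pprod_def l3_def algebra_simps)
lemma m_l3_Px[simp]: "(2::'a::comm_ring_1) = 0 \<Longrightarrow> mprod (lvec l3) (v::pt\<Rightarrow>'a) Px = v Pb + v Pc"
  by (simp add: mx_l3_Px two_x)
lemma mx_l3_Py: "mprod (lvec l3) (v::pt\<Rightarrow>'a::comm_ring_1) Py = 2 * v Pa + v Pc + v Px + 2 * v Py + 2 * v Pz"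
  by (simp add: mprod_pt pts_def pprod_def l3_def algebra_simps)
lemma m_l3_Py[simp]: "(2::'a::comm_ring_1) = 0 \<Longrightarrow> mprod (lvec l3) (v::pt\<Rightarrow>'a) Py = v Pc + v Px"
  by (simp add: mx_l3_Py two_x)
lemma mx_l3_Pz: "mprod (lvec l3) (v::pt\<Rightarrow>'a::comm_ring_1) Pz = 2 * v Pa + v Pb + v Px + 2 * v Py + 2 * v Pz"
  by (simp add: mprod_pt pts_def pprod_def l3_def algebra_simps)
lemma m_l3_Pz[simp]: "(2::'a::comm_ring_1) = 0 \<Longrightarrow> mprod (lvec l3) (v::pt\<Rightarrow>'a) Pz = v Pb + v Px"
  by (simp add: mx_l3_Pz two_x)
lemma mx_l4_Pa: "mprod (lvec l4) (v::pt\<Rightarrow>'a::comm_ring_1) Pa = 2 * v Pa + v Pb + v Pz"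
  by (simp add: mprod_pt pts_def pprod_def l4_def algebra_simps)
lemma m_l4_Pa[simp]: "(2::'a::comm_ring_1) = 0 \<Longrightarrow> mprod (lvec l4) (v::pt\<Rightarrow>'a) Pa = v Pb + v Pz"
  by (simp add: mx_l4_Pa two_x)
lemma mx_l4_Pb: "mprod (lvec l4) (v::pt\<Rightarrow>'a::comm_ring_1) Pb = v Pa + 2 * v Pb + v Pz"
  by (simp add: mprod_pt pts_def pprod_def l4_def algebra_simps)
lemma m_l4_Pb[simp]: "(2::'a::comm_ring_1) = 0 \<Longrightarrow> mprod (lvec l4) (v::pt\<Rightarrow>'a) Pb = v Pa + v Pz"
  by (simp add: mx_l4_Pb two_x)
lemma mx_l4_Pc: "mprod (lvec l4) (v::pt\<Rightarrow>'a::comm_ring_1) Pc = v Pa + v Pb + 2 * v Pc + 2 * v Px + 2 * v Py"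
  by (simp add: mprod_pt pts_def pprod_def l4_def algebra_simps)
lemma m_l4_Pc[simp]: "(2::'a::comm_ring_1) = 0 \<Longrightarrow> mprod (lvec l4) (v::pt\<Rightarrow>'a) Pc = v Pa + v Pb"
  by (simp add: mx_l4_Pc two_x)
lemma mx_l4_Px: "mprod (lvec l4) (v::pt\<Rightarrow>'a::comm_ring_1) Px = v Pb + 2 * v Pc + 2 * v Px + 2 * v Py + v Pz"
  by (simp add: mprod_pt pts_def pprod_def l4_def algebra_simps)
lemma m_l4_Px[simp]: "(2::'a::comm_ring_1) = 0 \<Longrightarrow> mprod (lvec l4) (v::pt\<Rightarrow>'a) Px = v Pb + v Pz"
  by (simp add: mx_l4_Px two_x)
lemma mx_l4_Py: "mprod (lvec l4) (v::pt\<Rightarrow>'a::comm_ring_1) Py = v Pa + 2 * v Pc + 2 * v Px + 2 * v Py + v Pz"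
  by (simp add: mprod_pt pts_def pprod_def l4_def algebra_simps)
lemma m_l4_Py[simp]: "(2::'a::comm_ring_1) = 0 \<Longrightarrow> mprod (lvec l4) (v::pt\<Rightarrow>'a) Py = v Pa + v Pz"
  by (simp add: mx_l4_Py two_x)
lemma mx_l4_Pz: "mprod (lvec l4) (v::pt\<Rightarrow>'a::comm_ring_1) Pz = v Pa + v Pb + 2 * v Pz"
  by (simp add: mprod_pt pts_def pprod_def l4_def algebra_simps)
lemma m_l4_Pz[simp]: "(2::'a::comm_ring_1) = 0 \<Longrightarrow> mprod (lvec l4) (v::pt\<Rightarrow>'a) Pz = v Pa + v Pb"
  by (simp add: mx_l4_Pz two_x)

lemma ad_simp[simp]: "ad L v r = mprod (lvec L) v r" by (simp add: ad_def)
lemma tau_simp[simp]: "tau L lam v r = v r + (1 + lam) * ad L v r" by (simp add: tau_def)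

lemma xx: "(2::'a::comm_ring_1) = 0 \<Longrightarrow> (x::'a) + x = 0"
  by (metis mult_2 mult_zero_left)

lemma hm: "(\<forall>j<6. \<forall>r\<in>{Pa,Pb,Pc,Px,Py,Pz}. f (basisB j) r = (\<Sum>i<6. S i j * basisB i r)) \<Longrightarrow> has_matrix f S"
  unfolding has_matrix_def
  apply (intro allI impI ext)
  subgoal for j r by (cases r) auto
  done

lemma b3[simp]: "(2::'a::comm_ring_1) = 0 \<Longrightarrow> basisB 3 r = (if r \<in> {Pb,Pc,Py,Pz} then (1::'a) else 0)"
  by (cases r) (simp_all add: basisB_def)
lemma b4[simp]: "(2::'a::comm_ring_1) = 0 \<Longrightarrow> basisB 4 r = (if r \<in> {Pa,Pc,Px,Pz} then (1::'a) else 0)"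
  by (cases r) (simp_all add: basisB_def)
lemma b0[simp]: "basisB 0 = ev Pa" by (simp add: basisB_def)
lemma b1[simp]: "basisB 1 = ev Pb" by (simp add: basisB_def)
lemma b1s[simp]: "basisB (Suc 0) = ev Pb" by (simp add: basisB_def)
lemma b2[simp]: "basisB 2 = lvec l1" by (simp add: basisB_def)
lemma b5[simp]: "basisB 5 = (\<lambda>r. 1)" by (simp add: basisB_def)

lemma l1_mem[simp]: "r \<in> l1 \<longleftrightarrow> r = Pa \<or> r = Pb \<or> r = Pc" by (simp add: l1_def)

theorem lemma6p9:
  fixes lam :: "'a::comm_ring_1"
  assumes char2: "(2::'a) = 0"
    and unit: "lam dvd 1"
  shows "has_matrix (tau l1 lam) (Smat 0 0 lam)
       \<and> has_matrix (tau l2 lam) (Smat (1 + lam) 0 lam)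
       \<and> has_matrix (tau l3 lam) (Smat 0 (1 + lam) lam)
       \<and> has_matrix (tau l4 lam) (Smat (1 + lam) (1 + lam) lam)"
  apply (intro conjI hm)
  apply (simp_all only: all6 ball_simps)
  apply (simp_all add: char2 sum6 Smat_def Mab_def)
  done
end
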